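(* Let $X$ be a Tychonoff space and $A\subseteq X$ a clopen subset. Then (a) $\operatorname{Homeo}_{cpt}(A)$ naturally embeds (by extending homeomorphisms by the identity on $X\setminus A$) as a closed topological subgroup of $\operatorname{Homeo}_{cpt}(X)$; and (b) if $X$ has CSHP, then so does $A$.
   Context: For a Tychonoff space $Y$, $\operatorname{Homeo}_{cpt}(Y)$ is the group of homeomorphisms of $Y$ with compact support $\operatorname{cl}_Y\{y\mid h(y)\neq y\}$; each extends to a homeomorphism of $\beta Y$ that is the identity on $\beta Y\setminus Y$, and $\operatorname{Homeo}_{cpt}(Y)$ is given the compact-open topology induced from $\beta Y$. For compact $K\subseteq Y$, $\operatorname{Homeo}_K(Y)$ is the subgroup of homeomorphisms fixing every point outside $K$. $Y$ has CSHP (Compactly Supported Homeomorphism Property) if the colimit space topology on $\bigcup_{K\in\mathscr K(Y)}\operatorname{Homeo}_K(Y)=\operatorname{Homeo}_{cpt}(Y)$, namely $\{U\mid U\cap\operatorname{Homeo}_K(Y)\text{ open in }\operatorname{Homeo}_K(Y)\ \forall K\}$ ($\mathscr K(Y)$ the compact subsets of $Y$), coincides with the topology of $\operatorname{Homeo}_{cpt}(Y)$. *)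

theory Defs
  imports "HOL-Analysis.Analysis"
begin

definition Tychonoff_sp :: "'a topology \<Rightarrow> bool" where
  "Tychonoff_sp Y \<longleftrightarrow> completely_regular_space Y \<and> Hausdorff_space Y"

text \<open>Stone-Cech compactification: closure of the evaluation embedding of Y
  into the cube [0,1]^C(Y,[0,1]).\<close>
definition SC_index :: "'a topology \<Rightarrow> ('a \<Rightarrow> real) set" where
  "SC_index Y = {f. continuous_map Y (top_of_set {0..1}) f}"

definition SC_cube :: "'a topology \<Rightarrow> (('a \<Rightarrow> real) \<Rightarrow> real) topology" where
  "SC_cube Y = product_topology (\<lambda>f. top_of_set {0..1::real}) (SC_index Y)"

definition SC_embed :: "'a topology \<Rightarrow> 'a \<Rightarrow> (('a \<Rightarrow> real) \<Rightarrow> real)" where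
  "SC_embed Y y = (\<lambda>f\<in>SC_index Y. f y)"

definition beta :: "'a topology \<Rightarrow> (('a \<Rightarrow> real) \<Rightarrow> real) topology" where
  "beta Y = subtopology (SC_cube Y) ((SC_cube Y) closure_of (SC_embed Y ` topspace Y))"

text \<open>The extension of a map h : Y -> Y to beta Y (on the cube: p |-> (f |-> p (f o h))).\<close>
definition SC_ext :: "'a topology \<Rightarrow> ('a \<Rightarrow> 'a) \<Rightarrow> (('a \<Rightarrow> real) \<Rightarrow> real) \<Rightarrow> (('a \<Rightarrow> real) \<Rightarrow> real)" where
  "SC_ext Y h = (\<lambda>p. \<lambda>f\<in>SC_index Y. p (f \<circ> h))"

definition Homeo_cpt :: "'a topology \<Rightarrow> ('a \<Rightarrow> 'a) set" where
  "Homeo_cpt Y = {h. homeomorphic_map Y Y h \<and> (\<forall>x. x \<notin> topspace Y \<longrightarrow> h x = x)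
      \<and> compactin Y (Y closure_of {y \<in> topspace Y. h y \<noteq> y})}"

text \<open>Topology on Homeo_cpt(Y): compact-open topology of the extensions to beta Y.\<close>
definition Homeo_cpt_top :: "'a topology \<Rightarrow> ('a \<Rightarrow> 'a) topology" where
  "Homeo_cpt_top Y = topology_generated_by
     {{h \<in> Homeo_cpt Y. SC_ext Y h ` K \<subseteq> U} | K U. compactin (beta Y) K \<and> openin (beta Y) U}"

definition Homeo_K :: "'a topology \<Rightarrow> 'a set \<Rightarrow> ('a \<Rightarrow> 'a) set" where
  "Homeo_K Y K = {h \<in> Homeo_cpt Y. \<forall>y \<in> topspace Y - K. h y = y}"

definition CSHP :: "'a topology \<Rightarrow> bool" where
  "CSHP Y \<longleftrightarrow> (\<forall>U. U \<subseteq> Homeo_cpt Y \<longrightarrow>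
     (openin (Homeo_cpt_top Y) U \<longleftrightarrow>
      (\<forall>K. compactin Y K \<longrightarrow>
           openin (subtopology (Homeo_cpt_top Y) (Homeo_K Y K)) (U \<inter> Homeo_K Y K))))"

definition ext_id :: "'a set \<Rightarrow> ('a \<Rightarrow> 'a) \<Rightarrow> 'a \<Rightarrow> 'a" where
  "ext_id A h = (\<lambda>x. if x \<in> A then h x else x)"

end

theory Submission
  imports Defs
begin

lemma SC_cube_Hausdorff: "Hausdorff_space (SC_cube Y)"
  unfolding SC_cube_def
  by (simp add: Hausdorff_space_product_topology Hausdorff_space_subtopology)

lemma SC_cube_compact: "compact_space (SC_cube Y)"
  unfolding SC_cube_def
  by (simp add: compact_space_product_topology compact_space_subtopology)

lemma topspace_beta: "topspace (beta Y) = SC_cube Y closure_of (SC_embed Y ` topspace Y)"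
  unfolding beta_def by (simp add: inf.absorb2 closure_of_subset_topspace)

lemma beta_Hausdorff: "Hausdorff_space (beta Y)"
  unfolding beta_def by (simp add: SC_cube_Hausdorff Hausdorff_space_subtopology)

lemma beta_compact: "compact_space (beta Y)"
  unfolding beta_def
  by (simp add: SC_cube_compact closedin_compact_space compact_space_subtopology)

lemma SC_index_comp:
  assumes "continuous_map Y Y h" "f \<in> SC_index Y"
  shows "f \<circ> h \<in> SC_index Y"
  using assms unfolding SC_index_def by (auto intro: continuous_map_compose)

lemma SC_embed_in: "y \<in> topspace Y \<Longrightarrow> SC_embed Y y \<in> topspace (SC_cube Y)"
  unfolding SC_embed_def SC_cube_def SC_index_def
  by (auto simp: continuous_map_def Pi_iff)

lemma SC_ext_cont:
  assumes "continuous_map Y Y h"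
  shows "continuous_map (SC_cube Y) (SC_cube Y) (SC_ext Y h)"
  unfolding SC_cube_def continuous_map_componentwise
proof (intro conjI ballI)
  show "SC_ext Y h ` topspace (product_topology (\<lambda>f. top_of_set {0..1}) (SC_index Y)) \<subseteq> extensional (SC_index Y)"
    by (auto simp: SC_ext_def)
  fix k assume k: "k \<in> SC_index Y"
  have "continuous_map (product_topology (\<lambda>f. top_of_set {0..1::real}) (SC_index Y)) (top_of_set {0..1}) (\<lambda>x. x (k \<circ> h))"
    using continuous_map_product_projection[OF SC_index_comp[OF assms k], where X="\<lambda>f. top_of_set {0..1::real}"] by simp
  then show "continuous_map (product_topology (\<lambda>f. top_of_set {0..1::real}) (SC_index Y)) (top_of_set {0..1}) (\<lambda>x. SC_ext Y h x k)"
    by (rule continuous_map_eq) (simp add: SC_ext_def k)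
qed

lemma SC_ext_embed:
  assumes "continuous_map Y Y h" "y \<in> topspace Y"
  shows "SC_ext Y h (SC_embed Y y) = SC_embed Y (h y)"
  unfolding SC_ext_def SC_embed_def
  by (rule ext) (simp add: SC_index_comp[OF assms(1)])

lemma SC_ext_beta:
  assumes "continuous_map Y Y h"
  shows "SC_ext Y h ` topspace (beta Y) \<subseteq> topspace (beta Y)"
proof -
  have "SC_ext Y h ` topspace (beta Y) \<subseteq> SC_cube Y closure_of (SC_ext Y h ` SC_embed Y ` topspace Y)"
    unfolding topspace_beta by (rule continuous_map_image_closure_subset[OF SC_ext_cont[OF assms]])
  also have "\<dots> \<subseteq> SC_cube Y closure_of (SC_embed Y ` topspace Y)"
    apply (rule closure_of_mono)
    using SC_ext_embed[OF assms] continuous_map_image_subset_topspace[OF assms] by auto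
  finally show ?thesis unfolding topspace_beta .
qed


lemma topspace_Hct: "topspace (Homeo_cpt_top Y) = Homeo_cpt Y"
proof -
  have "Homeo_cpt Y \<in> {{h \<in> Homeo_cpt Y. SC_ext Y h ` K \<subseteq> U} | K U. compactin (beta Y) K \<and> openin (beta Y) U}"
    by (rule CollectI, rule exI[of _ "{}"], rule exI[of _ "{}"]) auto
  then show ?thesis
    unfolding Homeo_cpt_top_def topology_generated_by_topspace by blast
qed

lemma clopen_paste:
  assumes "closedin X A" "openin X A"
    and f: "continuous_map (subtopology X A) Z f"
    and g: "continuous_map (subtopology X (topspace X - A)) Z g"
  shows "continuous_map X Z (\<lambda>x. if x \<in> A then f x else g x)"
proof (rule continuous_map_cases)
  have c1: "X closure_of {x. x \<in> A} = A"
    using assms(1) by (simp add: closure_of_closedin)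
  have c2: "X closure_of {x. x \<notin> A} = topspace X - A"
  proof -
    have "X closure_of {x. x \<notin> A} = X closure_of (topspace X - A)"
      by (metis Diff_eq closure_of_restrict Compl_eq)
    also have "\<dots> = topspace X - A"
      using assms(2) by (simp add: closure_of_closedin closedin_diff)
    finally show ?thesis .
  qed
  show "continuous_map (subtopology X (X closure_of {x. x \<in> A})) Z f" using c1 f by simp
  show "continuous_map (subtopology X (X closure_of {x. x \<notin> A})) Z g" using c2 g by simp
  have "X frontier_of {x. x \<in> A} = {}"
    using assms by (simp add: frontier_of_def closure_of_closedin interior_of_openin)
  then show "\<And>x. x \<in> X frontier_of {x. x \<in> A} \<Longrightarrow> f x = g x" by simp
qed

context
  fixes X :: "'a topology" and A :: "'a set"
  assumes clo: "closedin X A" and ope: "openin X A"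
begin

abbreviation "XA \<equiv> subtopology X A"

lemma A_sub: "A \<subseteq> topspace X"
  using clo closedin_subset by blast

lemma topA: "topspace XA = A"
  using A_sub by (simp add: inf.absorb2)

lemma paste: "continuous_map XA Z f \<Longrightarrow> continuous_map (subtopology X (topspace X - A)) Z g
   \<Longrightarrow> continuous_map X Z (\<lambda>x. if x \<in> A then f x else g x)"
  using clopen_paste[OF clo ope] by blast

lemma E_in: "g \<in> SC_index XA \<Longrightarrow> (\<lambda>x. if x \<in> A then g x else 0) \<in> SC_index X"
  unfolding SC_index_def by (auto intro!: paste)

lemma SX_sub: "SC_index X \<subseteq> SC_index XA"
  unfolding SC_index_def by (auto intro: continuous_map_from_subtopology)

lemma closure_supp:
  assumes "S \<subseteq> A"
  shows "XA closure_of S = X closure_of S"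
proof -
  have "X closure_of S \<subseteq> A" using assms clo by (simp add: closure_of_minimal)
  then show ?thesis by (simp add: closure_of_subtopology assms inf.absorb2 Int_absorb1)
qed

lemma HA_sub_aux:
  assumes h: "h \<in> Homeo_cpt XA"
  shows "h \<in> Homeo_cpt X"
proof -
  have hm: "homeomorphic_map XA XA h" and out0: "\<And>x. x \<notin> topspace XA \<Longrightarrow> h x = x"
    and cpt: "compactin XA (XA closure_of {y \<in> topspace XA. h y \<noteq> y})"
    using h unfolding Homeo_cpt_def by blast+
  have out: "\<And>x. x \<notin> A \<Longrightarrow> h x = x" using out0 topA by blast
  obtain g where g: "homeomorphic_maps XA XA h g" using hm homeomorphic_map_maps by blast
  have hc: "continuous_map XA XA h" and gc: "continuous_map XA XA g"
    and gh: "\<And>x. x \<in> A \<Longrightarrow> g (h x) = x" and hg: "\<And>x. x \<in> A \<Longrightarrow> h (g x) = x"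
    using g topA unfolding homeomorphic_maps_def by auto
  have hA: "\<And>x. x \<in> A \<Longrightarrow> h x \<in> A" and gA: "\<And>x. x \<in> A \<Longrightarrow> g x \<in> A"
    using continuous_map_image_subset_topspace[OF hc] continuous_map_image_subset_topspace[OF gc] topA
    by auto
  define h' where "h' = (\<lambda>x. if x \<in> A then h x else x)"
  define g' where "g' = (\<lambda>x. if x \<in> A then g x else x)"
  have hh': "h = h'" unfolding h'_def using out by auto
  have idc: "continuous_map (subtopology X (topspace X - A)) X (\<lambda>x. x)"
    using continuous_map_id_subt unfolding id_def .
  have "homeomorphic_maps X X h' g'"
    unfolding homeomorphic_maps_def
  proof (intro conjI ballI)
    show "continuous_map X X h'" unfolding h'_def
      by (rule paste[OF continuous_map_into_fulltopology[OF hc] idc])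
    show "continuous_map X X g'" unfolding g'_def
      by (rule paste[OF continuous_map_into_fulltopology[OF gc] idc])
  qed (auto simp: h'_def g'_def hA gA gh hg)
  then have "homeomorphic_map X X h" using hh' homeomorphic_map_maps by blast
  moreover have "\<forall>x. x \<notin> topspace X \<longrightarrow> h x = x" using out A_sub by auto
  moreover have e1: "{y \<in> topspace X. h y \<noteq> y} = {y \<in> topspace XA. h y \<noteq> y}"
    using out topA A_sub by auto
  have "{y \<in> topspace XA. h y \<noteq> y} \<subseteq> A" using topA by blast
  then have "compactin X (X closure_of {y \<in> topspace X. h y \<noteq> y})"
    unfolding e1 using cpt closure_supp[of "{y \<in> topspace XA. h y \<noteq> y}"]
    by (simp add: compactin_subtopology)
  ultimately show ?thesis unfolding Homeo_cpt_def by blast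
qed

lemma HA_char: "Homeo_cpt XA = {h \<in> Homeo_cpt X. \<forall>x \<in> topspace X - A. h x = x}"
proof (intro equalityI subsetI)
  fix h assume h: "h \<in> Homeo_cpt XA"
  then show "h \<in> {h \<in> Homeo_cpt X. \<forall>x \<in> topspace X - A. h x = x}"
    using HA_sub_aux topA unfolding Homeo_cpt_def by auto
next
  fix h assume "h \<in> {h \<in> Homeo_cpt X. \<forall>x \<in> topspace X - A. h x = x}"
  then have hm: "homeomorphic_map X X h" and out0: "\<And>x. x \<notin> topspace X \<Longrightarrow> h x = x"
    and cpt: "compactin X (X closure_of {y \<in> topspace X. h y \<noteq> y})"
    and fix0: "\<And>x. x \<in> topspace X - A \<Longrightarrow> h x = x"
    unfolding Homeo_cpt_def by auto
  have out: "\<And>x. x \<notin> A \<Longrightarrow> h x = x" using out0 fix0 by blast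
  have inj: "inj_on h (topspace X)" and surj: "h ` topspace X = topspace X"
    using homeomorphic_imp_injective_map[OF hm] homeomorphic_imp_surjective_map[OF hm] by auto
  have "h ` A = A"
  proof (intro equalityI subsetI)
    fix y assume "y \<in> h ` A"
    then obtain a where a: "a \<in> A" "y = h a" by blast
    have "h a \<in> topspace X" using a A_sub surj by blast
    show "y \<in> A"
    proof (rule ccontr)
      assume "y \<notin> A"
      then have "h (h a) = h a" using out a by simp
      then have "h a = a" using inj a A_sub \<open>h a \<in> topspace X\<close> by (meson inj_onD subsetD)
      then show False using \<open>y \<notin> A\<close> a by simp
    qed
  next
    fix y assume y: "y \<in> A"
    then obtain b where b: "b \<in> topspace X" "y = h b" using A_sub surj by blast
    have "b \<in> A" using out b y by (metis)
    then show "y \<in> h ` A" using b by blast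
  qed
  then have "homeomorphic_map XA XA h"
    using homeomorphic_map_subtopologies[OF hm] A_sub by (simp add: Int_absorb1)
  moreover have "\<forall>x. x \<notin> topspace XA \<longrightarrow> h x = x" using out topA by auto
  moreover have e1: "{y \<in> topspace X. h y \<noteq> y} = {y \<in> topspace XA. h y \<noteq> y}"
    using out topA A_sub by auto
  have sA: "{y \<in> topspace XA. h y \<noteq> y} \<subseteq> A" using topA by blast
  have "X closure_of {y \<in> topspace XA. h y \<noteq> y} \<subseteq> A"
    using sA clo by (simp add: closure_of_minimal)
  then have "compactin XA (XA closure_of {y \<in> topspace XA. h y \<noteq> y})"
    using cpt closure_supp[OF sA] unfolding e1
    by (simp add: compactin_subtopology)
  ultimately show "h \<in> Homeo_cpt XA" unfolding Homeo_cpt_def by blast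
qed


abbreviation "sigm q \<equiv> restrict q (SC_index X)"
abbreviation "BB \<equiv> SC_cube X closure_of (SC_embed X ` A)"
abbreviation "CC \<equiv> SC_cube X closure_of (SC_embed X ` (topspace X - A))"

lemma sig_cont: "continuous_map (SC_cube XA) (SC_cube X) sigm"
  unfolding SC_cube_def continuous_map_componentwise
proof (intro conjI ballI)
  show "sigm ` topspace (product_topology (\<lambda>f. top_of_set {0..1}) (SC_index XA)) \<subseteq> extensional (SC_index X)"
    by auto
  fix k assume k: "k \<in> SC_index X"
  then have k': "k \<in> SC_index XA" using SX_sub by blast
  have "continuous_map (product_topology (\<lambda>f. top_of_set {0..1::real}) (SC_index XA)) (top_of_set {0..1}) (\<lambda>x. x k)"
    using continuous_map_product_projection[OF k', where X="\<lambda>f. top_of_set {0..1::real}"] by simp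
  then show "continuous_map (product_topology (\<lambda>f. top_of_set {0..1::real}) (SC_index XA)) (top_of_set {0..1}) (\<lambda>x. sigm x k)"
    by (rule continuous_map_eq) (simp add: k)
qed

lemma sig_embed: "a \<in> A \<Longrightarrow> sigm (SC_embed XA a) = SC_embed X a"
  unfolding SC_embed_def using SX_sub by (auto simp: fun_eq_iff)

lemma beta_q_E:
  assumes q: "q \<in> topspace (beta XA)" and g: "g \<in> SC_index XA"
  shows "q g = q (\<lambda>x. if x \<in> A then g x else 0)"
proof -
  let ?E = "(\<lambda>x. if x \<in> A then g x else 0)"
  have Eg: "?E \<in> SC_index XA" using E_in[OF g] SX_sub by blast
  have "closedin (SC_cube XA) {q \<in> topspace (SC_cube XA). q g = q ?E}"
    unfolding SC_cube_def
    by (rule closedin_continuous_maps_eq[where Y="top_of_set {0..1::real}"])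
       (auto intro: Hausdorff_space_subtopology continuous_map_product_projection g Eg)
  moreover have "SC_embed XA ` topspace XA \<subseteq> {q \<in> topspace (SC_cube XA). q g = q ?E}"
  proof
    fix p assume "p \<in> SC_embed XA ` topspace XA"
    then obtain a where a: "a \<in> A" "p = SC_embed XA a" using topA by blast
    have "a \<in> topspace XA" using a topA by simp
    then have "p \<in> topspace (SC_cube XA)" unfolding a(2) by (rule SC_embed_in)
    moreover have "p g = p ?E" using a g Eg by (simp add: SC_embed_def)
    ultimately show "p \<in> {q \<in> topspace (SC_cube XA). q g = q ?E}" by blast
  qed
  ultimately have "topspace (beta XA) \<subseteq> {q \<in> topspace (SC_cube XA). q g = q ?E}"
    unfolding topspace_beta by (rule closure_of_minimal[rotated])
  then show ?thesis using q by blast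
qed

lemma sig_inj: "inj_on sigm (topspace (beta XA))"
proof (rule inj_onI)
  fix q1 q2 assume q1: "q1 \<in> topspace (beta XA)" and q2: "q2 \<in> topspace (beta XA)"
    and eq: "sigm q1 = sigm q2"
  have ext: "q1 \<in> extensional (SC_index XA)" "q2 \<in> extensional (SC_index XA)"
  proof -
    have "topspace (beta XA) \<subseteq> topspace (SC_cube XA)"
      by (simp add: topspace_beta closure_of_subset_topspace)
    then show "q1 \<in> extensional (SC_index XA)" "q2 \<in> extensional (SC_index XA)"
      using q1 q2 by (auto simp: SC_cube_def PiE_iff)
  qed
  show "q1 = q2"
  proof (rule extensionalityI[OF ext])
    fix g assume g: "g \<in> SC_index XA"
    let ?E = "(\<lambda>x. if x \<in> A then g x else 0)"
    have "q1 ?E = q2 ?E" using eq E_in[OF g] by (metis restrict_apply')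
    then show "q1 g = q2 g" using beta_q_E[OF q1 g] beta_q_E[OF q2 g] by simp
  qed
qed

lemma sig_beta_cont: "continuous_map (beta XA) (beta X) sigm"
proof -
  have "sigm ` topspace (beta XA) \<subseteq> SC_cube X closure_of (sigm ` SC_embed XA ` topspace XA)"
    unfolding topspace_beta by (rule continuous_map_image_closure_subset[OF sig_cont])
  also have "sigm ` SC_embed XA ` topspace XA = SC_embed X ` A"
    using sig_embed topA by (auto simp: image_image)
  finally have "sigm ` topspace (beta XA) \<subseteq> BB" .
  also have "BB \<subseteq> topspace (beta X)" unfolding topspace_beta
    using A_sub by (intro closure_of_mono image_mono)
  finally have "sigm ` topspace (beta XA) \<subseteq> topspace (beta X)" .
  then have f: "sigm \<in> topspace (beta XA) \<rightarrow> SC_cube X closure_of (SC_embed X ` topspace X)"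
    using topspace_beta[of X] by blast
  have "continuous_map (beta XA) (SC_cube X) sigm"
    unfolding beta_def[of XA] by (rule continuous_map_from_subtopology[OF sig_cont])
  with f show ?thesis unfolding beta_def[of X] continuous_map_in_subtopology by blast
qed

lemma sig_onto: "sigm ` topspace (beta XA) = BB"
proof (intro equalityI)
  have "sigm ` topspace (beta XA) \<subseteq> SC_cube X closure_of (sigm ` SC_embed XA ` topspace XA)"
    unfolding topspace_beta by (rule continuous_map_image_closure_subset[OF sig_cont])
  also have "sigm ` SC_embed XA ` topspace XA = SC_embed X ` A"
    using sig_embed topA by (auto simp: image_image)
  finally show "sigm ` topspace (beta XA) \<subseteq> BB" .
  have "compactin (SC_cube XA) (topspace (beta XA))"
    unfolding topspace_beta
    by (rule closedin_compact_space[OF SC_cube_compact closedin_closure_of])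
  then have "compactin (SC_cube X) (sigm ` topspace (beta XA))"
    by (rule image_compactin[OF _ sig_cont])
  then have cl: "closedin (SC_cube X) (sigm ` topspace (beta XA))"
    by (rule compactin_imp_closedin[OF SC_cube_Hausdorff])
  have "SC_embed X ` A \<subseteq> sigm ` topspace (beta XA)"
  proof
    fix p assume "p \<in> SC_embed X ` A"
    then obtain a where a: "a \<in> A" "p = SC_embed X a" by blast
    have "a \<in> topspace XA" using a topA by simp
    then have "SC_embed XA a \<in> SC_embed XA ` topspace XA" "SC_embed XA a \<in> topspace (SC_cube XA)"
      using SC_embed_in[OF \<open>a \<in> topspace XA\<close>] by blast+
    then have "SC_embed XA a \<in> topspace (beta XA)"
      unfolding topspace_beta using closure_of_subset_Int[of "SC_cube XA" "SC_embed XA ` topspace XA"] by blast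
    moreover have "p = sigm (SC_embed XA a)" using a sig_embed by simp
    ultimately show "p \<in> sigm ` topspace (beta XA)" by blast
  qed
  then show "BB \<subseteq> sigm ` topspace (beta XA)"
    by (rule closure_of_minimal[OF _ cl])
qed


lemma HA_props:
  assumes "h \<in> Homeo_cpt XA"
  shows "h \<in> Homeo_cpt X" "continuous_map X X h" "continuous_map XA XA h"
    "\<And>x. x \<in> topspace X - A \<Longrightarrow> h x = x"
  using assms HA_char unfolding Homeo_cpt_def
  by (auto dest: homeomorphic_imp_continuous_map)

lemma ext_sig:
  assumes "continuous_map X X h"
  shows "SC_ext X h (sigm q) = sigm (SC_ext XA h q)"
proof (rule ext)
  fix f show "SC_ext X h (sigm q) f = sigm (SC_ext XA h q) f"
  proof (cases "f \<in> SC_index X")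
    case True
    then have "f \<circ> h \<in> SC_index X" "f \<in> SC_index XA"
      using SC_index_comp[OF assms] SX_sub by auto
    then show ?thesis using True by (simp add: SC_ext_def)
  qed (simp add: SC_ext_def)
qed

lemma ext_C:
  assumes h: "h \<in> Homeo_cpt XA" and p: "p \<in> CC"
  shows "SC_ext X h p = p"
proof -
  have hc: "continuous_map X X h" using HA_props[OF h] by blast
  have "closedin (SC_cube X) {p \<in> topspace (SC_cube X). SC_ext X h p = id p}"
    by (rule closedin_continuous_maps_eq[OF SC_cube_Hausdorff SC_ext_cont[OF hc] continuous_map_id])
  moreover have "SC_embed X ` (topspace X - A) \<subseteq> {p \<in> topspace (SC_cube X). SC_ext X h p = id p}"
  proof
    fix p assume "p \<in> SC_embed X ` (topspace X - A)"
    then obtain x where x: "x \<in> topspace X - A" "p = SC_embed X x" by blast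
    have "p \<in> topspace (SC_cube X)" unfolding x(2) using x(1) by (intro SC_embed_in) blast
    moreover have "SC_ext X h p = p"
      unfolding x(2) using SC_ext_embed[OF hc, of x] x(1) HA_props(4)[OF h x(1)] by simp
    ultimately show "p \<in> {p \<in> topspace (SC_cube X). SC_ext X h p = id p}" by simp
  qed
  ultimately have "CC \<subseteq> {p \<in> topspace (SC_cube X). SC_ext X h p = id p}"
    by (rule closure_of_minimal[rotated])
  then show ?thesis using p by auto
qed

lemma beta_split: "topspace (beta X) = BB \<union> CC"
proof -
  have "topspace X = A \<union> (topspace X - A)" using A_sub by blast
  then have "SC_embed X ` topspace X = SC_embed X ` A \<union> SC_embed X ` (topspace X - A)" by blast
  then show ?thesis unfolding topspace_beta by simp
qed

lemma HA_sub: "Homeo_cpt XA \<subseteq> Homeo_cpt X"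
  using HA_props by blast

lemma beta_sig_in: "q \<in> topspace (beta XA) \<Longrightarrow> sigm q \<in> topspace (beta X)"
  using continuous_map_image_subset_topspace[OF sig_beta_cont] by blast

lemma USX: "\<Union> {{h \<in> Homeo_cpt X. SC_ext X h ` K \<subseteq> U} |K U. compactin (beta X) K \<and> openin (beta X) U} = Homeo_cpt X"
  by (rule topspace_Hct[of X, unfolded Homeo_cpt_top_def topology_generated_by_topspace])

lemma USA: "\<Union> {{h \<in> Homeo_cpt XA. SC_ext XA h ` K \<subseteq> U} |K U. compactin (beta XA) K \<and> openin (beta XA) U} = Homeo_cpt XA"
  by (rule topspace_Hct[of XA, unfolded Homeo_cpt_top_def topology_generated_by_topspace])

lemma c1_key:
  fixes V
  assumes K: "compactin (beta X) K" and h: "h \<in> Homeo_cpt XA"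
  defines "K' \<equiv> {q \<in> topspace (beta XA). sigm q \<in> K}"
      and "V' \<equiv> {q \<in> topspace (beta XA). sigm q \<in> V}"
  shows "SC_ext X h ` K \<subseteq> V \<longleftrightarrow> K \<inter> CC \<subseteq> V \<and> SC_ext XA h ` K' \<subseteq> V'"
proof -
  have Ksub: "K \<subseteq> BB \<union> CC" using compactin_subset_topspace[OF K] beta_split by simp
  have hc: "continuous_map X X h" and hca: "continuous_map XA XA h"
    using HA_props[OF h] by auto
  show ?thesis
  proof
    assume L: "SC_ext X h ` K \<subseteq> V"
    have "K \<inter> CC \<subseteq> V"
    proof
      fix p assume p: "p \<in> K \<inter> CC"
      then have "SC_ext X h p \<in> V" using L by blast
      moreover have "SC_ext X h p = p" using p ext_C[OF h] by blast
      ultimately show "p \<in> V" by simp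
    qed
    moreover have "SC_ext XA h ` K' \<subseteq> V'"
    proof
      fix r assume "r \<in> SC_ext XA h ` K'"
      then obtain q where q: "q \<in> K'" "r = SC_ext XA h q" by blast
      have qb: "q \<in> topspace (beta XA)" "sigm q \<in> K" using q unfolding K'_def by blast+
      have "r \<in> topspace (beta XA)" using qb(1) q(2) SC_ext_beta[OF hca] by blast
      moreover have "SC_ext X h (sigm q) \<in> V" using L qb(2) by blast
      then have "sigm r \<in> V" using ext_sig[OF hc, of q] q(2) by simp
      ultimately show "r \<in> V'" unfolding V'_def by blast
    qed
    ultimately show "K \<inter> CC \<subseteq> V \<and> SC_ext XA h ` K' \<subseteq> V'" by blast
  next
    assume R: "K \<inter> CC \<subseteq> V \<and> SC_ext XA h ` K' \<subseteq> V'"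
    show "SC_ext X h ` K \<subseteq> V"
    proof
      fix r assume "r \<in> SC_ext X h ` K"
      then obtain p where p: "p \<in> K" "r = SC_ext X h p" by blast
      show "r \<in> V"
      proof (cases "p \<in> CC")
        case True
        then have "p \<in> V" using p R by blast
        then show ?thesis using p ext_C[OF h True] by simp
      next
        case False
        then have "p \<in> BB" using p Ksub by blast
        then obtain q where q: "q \<in> topspace (beta XA)" "p = sigm q" using sig_onto by blast
        then have "q \<in> K'" using p unfolding K'_def by blast
        then have "SC_ext XA h q \<in> V'" using R by blast
        then have "sigm (SC_ext XA h q) \<in> V" unfolding V'_def by blast
        then show ?thesis using p q ext_sig[OF hc, of q] by simp
      qed
    qed
  qed
qed

lemma c1: "continuous_map (Homeo_cpt_top XA) (Homeo_cpt_top X) id"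
  unfolding Homeo_cpt_top_def[of X]
proof (rule continuous_on_generated_topo)
  show "id ` topspace (Homeo_cpt_top XA) \<subseteq> \<Union> {{h \<in> Homeo_cpt X. SC_ext X h ` K \<subseteq> U} |K U. compactin (beta X) K \<and> openin (beta X) U}"
    unfolding USX topspace_Hct using HA_sub by simp
  fix U assume "U \<in> {{h \<in> Homeo_cpt X. SC_ext X h ` K \<subseteq> U} |K U. compactin (beta X) K \<and> openin (beta X) U}"
  then obtain K V where U: "U = {h \<in> Homeo_cpt X. SC_ext X h ` K \<subseteq> V}" and K: "compactin (beta X) K"
    and V: "openin (beta X) V" by blast
  define K' where "K' = {q \<in> topspace (beta XA). sigm q \<in> K}"
  define V' where "V' = {q \<in> topspace (beta XA). sigm q \<in> V}"
  have K'c: "compactin (beta XA) K'"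
  proof -
    have "closedin (beta X) K" by (rule compactin_imp_closedin[OF beta_Hausdorff K])
    then have "closedin (beta XA) K'" unfolding K'_def
      by (rule closedin_continuous_map_preimage[OF sig_beta_cont])
    then show ?thesis by (rule closedin_compact_space[OF beta_compact])
  qed
  have V'o: "openin (beta XA) V'" unfolding V'_def
    by (rule openin_continuous_map_preimage[OF sig_beta_cont V])
  have key: "\<And>h. h \<in> Homeo_cpt XA \<Longrightarrow>
     SC_ext X h ` K \<subseteq> V \<longleftrightarrow> K \<inter> CC \<subseteq> V \<and> SC_ext XA h ` K' \<subseteq> V'"
    unfolding K'_def V'_def by (rule c1_key[OF K])
  have pre: "id -` U \<inter> topspace (Homeo_cpt_top XA) = U \<inter> Homeo_cpt XA"
    by (simp add: topspace_Hct)
  show "openin (Homeo_cpt_top XA) (id -` U \<inter> topspace (Homeo_cpt_top XA))"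
  proof (cases "K \<inter> CC \<subseteq> V")
    case True
    have "U \<inter> Homeo_cpt XA = {h \<in> Homeo_cpt XA. SC_ext XA h ` K' \<subseteq> V'}"
    proof (intro equalityI subsetI)
      fix h assume "h \<in> U \<inter> Homeo_cpt XA"
      then show "h \<in> {h \<in> Homeo_cpt XA. SC_ext XA h ` K' \<subseteq> V'}"
        using key[of h] unfolding U by blast
    next
      fix h assume h: "h \<in> {h \<in> Homeo_cpt XA. SC_ext XA h ` K' \<subseteq> V'}"
      then have "SC_ext X h ` K \<subseteq> V" using key[of h] True by blast
      then show "h \<in> U \<inter> Homeo_cpt XA" using h HA_sub unfolding U by blast
    qed
    moreover have "openin (Homeo_cpt_top XA) {h \<in> Homeo_cpt XA. SC_ext XA h ` K' \<subseteq> V'}"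
      unfolding Homeo_cpt_top_def
      by (rule topology_generated_by_Basis) (use K'c V'o in blast)
    ultimately show ?thesis using pre by simp
  next
    case False
    have "U \<inter> Homeo_cpt XA = {}"
    proof (intro equalityI subsetI)
      fix h assume "h \<in> U \<inter> Homeo_cpt XA"
      then show "h \<in> {}" using key[of h] False unfolding U by blast
    qed simp
    then show ?thesis using pre by simp
  qed
qed


lemma c2: "continuous_map (subtopology (Homeo_cpt_top X) (Homeo_cpt XA)) (Homeo_cpt_top XA) id"
  unfolding Homeo_cpt_top_def[of XA]
proof (rule continuous_on_generated_topo)
  show "id ` topspace (subtopology (Homeo_cpt_top X) (Homeo_cpt XA)) \<subseteq> \<Union> {{h \<in> Homeo_cpt XA. SC_ext XA h ` K \<subseteq> U} |K U. compactin (beta XA) K \<and> openin (beta XA) U}"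
    unfolding USA by (simp add: topspace_Hct)
  fix U assume "U \<in> {{h \<in> Homeo_cpt XA. SC_ext XA h ` K \<subseteq> U} |K U. compactin (beta XA) K \<and> openin (beta XA) U}"
  then obtain K' V' where U: "U = {h \<in> Homeo_cpt XA. SC_ext XA h ` K' \<subseteq> V'}" and K': "compactin (beta XA) K'"
    and V': "openin (beta XA) V'" by blast
  define K where "K = sigm ` K'"
  define W where "W = topspace (beta X) - sigm ` (topspace (beta XA) - V')"
  have Kc: "compactin (beta X) K" unfolding K_def by (rule image_compactin[OF K' sig_beta_cont])
  have Wo: "openin (beta X) W"
  proof -
    have "closedin (beta XA) (topspace (beta XA) - V')" using V' by blast
    then have "compactin (beta XA) (topspace (beta XA) - V')" by (rule closedin_compact_space[OF beta_compact])
    then have "compactin (beta X) (sigm ` (topspace (beta XA) - V'))" by (rule image_compactin[OF _ sig_beta_cont])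
    then have "closedin (beta X) (sigm ` (topspace (beta XA) - V'))" by (rule compactin_imp_closedin[OF beta_Hausdorff])
    then show ?thesis unfolding W_def by blast
  qed
  have K'sub: "K' \<subseteq> topspace (beta XA)" by (rule compactin_subset_topspace[OF K'])
  have V'sub: "V' \<subseteq> topspace (beta XA)" by (rule openin_subset[OF V'])
  have key: "SC_ext XA h ` K' \<subseteq> V' \<longleftrightarrow> SC_ext X h ` K \<subseteq> W" if h: "h \<in> Homeo_cpt XA" for h
  proof -
    have hc: "continuous_map X X h" and hca: "continuous_map XA XA h"
      using HA_props[OF h] by auto
    have "SC_ext XA h q \<in> V' \<longleftrightarrow> SC_ext X h (sigm q) \<in> W" if q: "q \<in> K'" for q
    proof -
      let ?r = "SC_ext XA h q"
      have r: "?r \<in> topspace (beta XA)" using q K'sub SC_ext_beta[OF hca] by blast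
      have "sigm ?r \<in> topspace (beta X)" by (rule beta_sig_in[OF r])
      moreover have "sigm ?r \<in> sigm ` (topspace (beta XA) - V') \<longleftrightarrow> ?r \<in> topspace (beta XA) - V'"
        using inj_on_image_mem_iff[OF sig_inj r, of "topspace (beta XA) - V'"] by blast
      ultimately have "?r \<in> V' \<longleftrightarrow> sigm ?r \<in> W" unfolding W_def using r by blast
      moreover have "SC_ext X h (sigm q) = sigm ?r" by (rule ext_sig[OF hc])
      ultimately show ?thesis by simp
    qed
    then show ?thesis by (simp add: K_def image_subset_iff)
  qed
  have Ueq: "U = Homeo_cpt XA \<inter> {h \<in> Homeo_cpt X. SC_ext X h ` K \<subseteq> W}"
  proof (intro equalityI subsetI)
    fix h assume "h \<in> U"
    then have h: "h \<in> Homeo_cpt XA" "SC_ext XA h ` K' \<subseteq> V'" unfolding U by blast+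
    then have "SC_ext X h ` K \<subseteq> W" using key[OF h(1)] by blast
    then show "h \<in> Homeo_cpt XA \<inter> {h \<in> Homeo_cpt X. SC_ext X h ` K \<subseteq> W}" using h HA_sub by blast
  next
    fix h assume "h \<in> Homeo_cpt XA \<inter> {h \<in> Homeo_cpt X. SC_ext X h ` K \<subseteq> W}"
    then have h: "h \<in> Homeo_cpt XA" "SC_ext X h ` K \<subseteq> W" by blast+
    then have "SC_ext XA h ` K' \<subseteq> V'" using key[OF h(1)] by blast
    then show "h \<in> U" unfolding U using h by blast
  qed
  have op: "openin (Homeo_cpt_top X) {h \<in> Homeo_cpt X. SC_ext X h ` K \<subseteq> W}"
    unfolding Homeo_cpt_top_def
    by (rule topology_generated_by_Basis) (use Kc Wo in blast)
  have "openin (subtopology (Homeo_cpt_top X) (Homeo_cpt XA)) (Homeo_cpt XA \<inter> {h \<in> Homeo_cpt X. SC_ext X h ` K \<subseteq> W})"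
    by (rule openin_subtopology_Int2[OF op])
  then have oU: "openin (subtopology (Homeo_cpt_top X) (Homeo_cpt XA)) U" using Ueq by simp
  have "topspace (subtopology (Homeo_cpt_top X) (Homeo_cpt XA)) = Homeo_cpt XA"
    using HA_sub by (simp add: topspace_Hct Int_absorb1)
  moreover have "U \<subseteq> Homeo_cpt XA" unfolding U by blast
  ultimately have "id -` U \<inter> topspace (subtopology (Homeo_cpt_top X) (Homeo_cpt XA)) = U"
    by auto
  with oU show "openin (subtopology (Homeo_cpt_top X) (Homeo_cpt XA))
       (id -` U \<inter> topspace (subtopology (Homeo_cpt_top X) (Homeo_cpt XA)))" by simp
qed

lemma top_eq: "subtopology (Homeo_cpt_top X) (Homeo_cpt XA) = Homeo_cpt_top XA"
proof -
  have "continuous_map (Homeo_cpt_top XA) (subtopology (Homeo_cpt_top X) (Homeo_cpt XA)) id"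
    using c1 by (simp add: continuous_map_in_subtopology topspace_Hct)
  then have "homeomorphic_maps (Homeo_cpt_top XA) (subtopology (Homeo_cpt_top X) (Homeo_cpt XA)) id id"
    using c2 unfolding homeomorphic_maps_def by simp
  then have "homeomorphic_map (Homeo_cpt_top XA) (subtopology (Homeo_cpt_top X) (Homeo_cpt XA)) id"
    using homeomorphic_map_maps by blast
  then show ?thesis by simp
qed


lemma ext_id_eq: "(\<And>x. x \<notin> A \<Longrightarrow> f x = x) \<Longrightarrow> ext_id A f = f"
  unfolding ext_id_def by (rule ext) auto

lemma HA_out: "h \<in> Homeo_cpt XA \<Longrightarrow> x \<notin> A \<Longrightarrow> h x = x"
  using topA unfolding Homeo_cpt_def by auto

lemma ext_id_HA: "h \<in> Homeo_cpt XA \<Longrightarrow> ext_id A h = h"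
  using ext_id_eq HA_out by blast

lemma embed_beta: "y \<in> topspace Y \<Longrightarrow> SC_embed Y y \<in> topspace (beta Y)"
  unfolding topspace_beta using closure_of_subset_Int[of "SC_cube Y" "SC_embed Y ` topspace Y"]
    SC_embed_in[of y Y] by blast

lemma eX_inj:
  assumes T: "Tychonoff_sp X"
  shows "inj_on (SC_embed X) (topspace X)"
proof (rule inj_onI, rule ccontr)
  fix x y assume x: "x \<in> topspace X" and y: "y \<in> topspace X" and eq: "SC_embed X x = SC_embed X y"
    and ne: "x \<noteq> y"
  have cr: "completely_regular_space X" and H: "Hausdorff_space X" using T unfolding Tychonoff_sp_def by auto
  have "closedin X {y}" using closedin_t1_singleton[OF Hausdorff_imp_t1_space[OF H] y] .
  then obtain f :: "'a \<Rightarrow> real" where f: "continuous_map X (top_of_set {0..1}) f" "f x = 0" "f ` {y} \<subseteq> {1}"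
    using cr x ne unfolding completely_regular_space_def by blast
  have fS: "f \<in> SC_index X" using f(1) unfolding SC_index_def by blast
  have "SC_embed X x f = SC_embed X y f" using eq by simp
  then have "f x = f y" using fS unfolding SC_embed_def by simp
  then show False using f by simp
qed

lemma HA_closed:
  assumes T: "Tychonoff_sp X"
  shows "closedin (Homeo_cpt_top X) (Homeo_cpt XA)"
proof -
  define F where "F = (\<lambda>x. {h \<in> Homeo_cpt X. SC_ext X h ` {SC_embed X x} \<subseteq> topspace (beta X) - {SC_embed X x}})"
  have Fo: "openin (Homeo_cpt_top X) (F x)" if x: "x \<in> topspace X" for x
  proof -
    have e: "SC_embed X x \<in> topspace (beta X)" by (rule embed_beta[OF x])
    have "closedin (beta X) {SC_embed X x}"
      by (rule closedin_t1_singleton[OF Hausdorff_imp_t1_space[OF beta_Hausdorff] e])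
    then have "openin (beta X) (topspace (beta X) - {SC_embed X x})" by blast
    moreover have "compactin (beta X) {SC_embed X x}" using e by simp
    ultimately show ?thesis unfolding F_def Homeo_cpt_top_def
      by (intro topology_generated_by_Basis) blast
  qed
  have eq: "Homeo_cpt X - Homeo_cpt XA = (\<Union>x \<in> topspace X - A. F x)"
  proof (intro equalityI subsetI)
    fix h assume h: "h \<in> Homeo_cpt X - Homeo_cpt XA"
    then obtain x where x: "x \<in> topspace X - A" "h x \<noteq> x" using HA_char by blast
    have hc: "continuous_map X X h" using h unfolding Homeo_cpt_def
      by (auto dest: homeomorphic_imp_continuous_map)
    have hx: "h x \<in> topspace X" using x hc continuous_map_image_subset_topspace by blast
    have "SC_embed X (h x) \<noteq> SC_embed X x" using eX_inj[OF T] x hx by (meson DiffD1 inj_onD)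
    moreover have "SC_embed X (h x) \<in> topspace (beta X)" by (rule embed_beta[OF hx])
    ultimately have "h \<in> F x" unfolding F_def using h SC_ext_embed[OF hc, of x] x by auto
    then show "h \<in> (\<Union>x \<in> topspace X - A. F x)" using x by blast
  next
    fix h assume "h \<in> (\<Union>x \<in> topspace X - A. F x)"
    then obtain x where x: "x \<in> topspace X - A" and hF: "h \<in> F x" by blast
    have h: "h \<in> Homeo_cpt X" using hF unfolding F_def by blast
    have hc: "continuous_map X X h" using h unfolding Homeo_cpt_def
      by (auto dest: homeomorphic_imp_continuous_map)
    have "SC_ext X h (SC_embed X x) \<noteq> SC_embed X x" using hF unfolding F_def by blast
    then have "h x \<noteq> x" using SC_ext_embed[OF hc, of x] x by auto
    then show "h \<in> Homeo_cpt X - Homeo_cpt XA" using h x HA_char by blast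
  qed
  have "openin (Homeo_cpt_top X) (\<Union>x \<in> topspace X - A. F x)"
    using Fo by (intro openin_Union) blast
  then have "openin (Homeo_cpt_top X) (topspace (Homeo_cpt_top X) - Homeo_cpt XA)"
    using eq by (simp add: topspace_Hct)
  then show ?thesis unfolding closedin_def using HA_sub by (simp add: topspace_Hct)
qed

lemma HK_eq:
  assumes K: "compactin X K"
  shows "Homeo_K XA (K \<inter> A) = Homeo_cpt XA \<inter> Homeo_K X K"
  unfolding Homeo_K_def using HA_sub HA_out topA A_sub by auto

lemma CSHP_A:
  assumes C: "CSHP X" and T: "Tychonoff_sp X"
  shows "CSHP XA"
  unfolding CSHP_def
proof (intro allI impI iffI)
  fix V K assume "openin (Homeo_cpt_top XA) V"
  then show "openin (subtopology (Homeo_cpt_top XA) (Homeo_K XA K)) (V \<inter> Homeo_K XA K)"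
    by (rule openin_subtopology_Int)
next
  fix V assume Vs: "V \<subseteq> Homeo_cpt XA"
    and R: "\<forall>K. compactin XA K \<longrightarrow> openin (subtopology (Homeo_cpt_top XA) (Homeo_K XA K)) (V \<inter> Homeo_K XA K)"
  define W where "W = V \<union> (Homeo_cpt X - Homeo_cpt XA)"
  have Ws: "W \<subseteq> Homeo_cpt X" unfolding W_def using Vs HA_sub by blast
  have Co: "openin (Homeo_cpt_top X) (Homeo_cpt X - Homeo_cpt XA)"
    using HA_closed[OF T] unfolding closedin_def by (simp add: topspace_Hct)
  have "openin (subtopology (Homeo_cpt_top X) (Homeo_K X K)) (W \<inter> Homeo_K X K)"
    if K: "compactin X K" for K
  proof -
    have "compactin XA (K \<inter> A)" using compact_Int_closedin[OF K clo]
      by (simp add: compactin_subtopology)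
    then have "openin (subtopology (Homeo_cpt_top XA) (Homeo_K XA (K \<inter> A))) (V \<inter> Homeo_K XA (K \<inter> A))"
      using R by blast
    then have "openin (subtopology (Homeo_cpt_top X) (Homeo_cpt XA \<inter> Homeo_K X K)) (V \<inter> (Homeo_cpt XA \<inter> Homeo_K X K))"
      unfolding HK_eq[OF K] top_eq[symmetric] subtopology_subtopology Int_assoc[symmetric] Int_absorb .
    then obtain Ob where Ob: "openin (Homeo_cpt_top X) Ob" and OV: "V \<inter> (Homeo_cpt XA \<inter> Homeo_K X K) = Ob \<inter> (Homeo_cpt XA \<inter> Homeo_K X K)"
      unfolding openin_subtopology by blast
    have Ob': "openin (Homeo_cpt_top X) (Ob \<union> (Homeo_cpt X - Homeo_cpt XA))" using Ob Co by blast
    have HKs: "Homeo_K X K \<subseteq> Homeo_cpt X" unfolding Homeo_K_def by blast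
    have "W \<inter> Homeo_K X K = (Ob \<union> (Homeo_cpt X - Homeo_cpt XA)) \<inter> Homeo_K X K"
    proof (intro equalityI subsetI)
      fix h assume h: "h \<in> W \<inter> Homeo_K X K"
      show "h \<in> (Ob \<union> (Homeo_cpt X - Homeo_cpt XA)) \<inter> Homeo_K X K"
      proof (cases "h \<in> Homeo_cpt XA")
        case True
        then have "h \<in> V" using h unfolding W_def by blast
        then have "h \<in> Ob" using OV True h by blast
        then show ?thesis using h by blast
      qed (use h HKs in blast)
    next
      fix h assume h: "h \<in> (Ob \<union> (Homeo_cpt X - Homeo_cpt XA)) \<inter> Homeo_K X K"
      show "h \<in> W \<inter> Homeo_K X K"
      proof (cases "h \<in> Homeo_cpt XA")
        case True
        then have "h \<in> Ob" using h by blast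
        then have "h \<in> V" using OV True h by blast
        then show ?thesis using h unfolding W_def by blast
      qed (use h HKs W_def in blast)
    qed
    then show ?thesis using openin_subtopology_Int[OF Ob'] by simp
  qed
  then have "openin (Homeo_cpt_top X) W" using C Ws unfolding CSHP_def by blast
  then have "openin (subtopology (Homeo_cpt_top X) (Homeo_cpt XA)) (W \<inter> Homeo_cpt XA)"
    by (rule openin_subtopology_Int)
  moreover have "W \<inter> Homeo_cpt XA = V" unfolding W_def using Vs by blast
  ultimately show "openin (Homeo_cpt_top XA) V" using top_eq by simp
qed

end

theorem lemma5p3:
  fixes X :: "'a topology" and A :: "'a set"
  assumes "Tychonoff_sp X" and "closedin X A" and "openin X A"
  shows "embedding_map (Homeo_cpt_top (subtopology X A)) (Homeo_cpt_top X) (ext_id A)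
    \<and> closedin (Homeo_cpt_top X) (ext_id A ` Homeo_cpt (subtopology X A))
    \<and> ext_id A id = id
    \<and> (\<forall>g \<in> Homeo_cpt (subtopology X A). \<forall>h \<in> Homeo_cpt (subtopology X A).
          ext_id A (g \<circ> h) = ext_id A g \<circ> ext_id A h)
    \<and> (CSHP X \<longrightarrow> CSHP (subtopology X A))"
proof (intro conjI ballI impI)
  note clo = assms(2) and ope = assms(3)
  have img: "ext_id A ` Homeo_cpt (subtopology X A) = Homeo_cpt (subtopology X A)"
    using ext_id_HA[OF clo ope] by simp
  have "homeomorphic_map (Homeo_cpt_top (subtopology X A))
      (subtopology (Homeo_cpt_top X) (Homeo_cpt (subtopology X A))) id"
    using top_eq[OF clo ope] by simp
  then have "homeomorphic_map (Homeo_cpt_top (subtopology X A))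
      (subtopology (Homeo_cpt_top X) (Homeo_cpt (subtopology X A))) (ext_id A)"
    by (rule homeomorphic_map_eq) (simp add: topspace_Hct ext_id_HA[OF clo ope])
  then show "embedding_map (Homeo_cpt_top (subtopology X A)) (Homeo_cpt_top X) (ext_id A)"
    unfolding embedding_map_def topspace_Hct img .
  show "closedin (Homeo_cpt_top X) (ext_id A ` Homeo_cpt (subtopology X A))"
    unfolding img by (rule HA_closed[OF clo ope assms(1)])
  show "ext_id A id = id" by (auto simp: ext_id_def)
  fix g h assume g: "g \<in> Homeo_cpt (subtopology X A)" and h: "h \<in> Homeo_cpt (subtopology X A)"
  have "ext_id A (g \<circ> h) = g \<circ> h"
    by (rule ext_id_eq[OF clo ope]) (simp add: HA_out[OF clo ope g] HA_out[OF clo ope h])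
  then show "ext_id A (g \<circ> h) = ext_id A g \<circ> ext_id A h"
    using ext_id_HA[OF clo ope g] ext_id_HA[OF clo ope h] by simp
next
  assume "CSHP X"
  then show "CSHP (subtopology X A)" using CSHP_A[OF assms(2,3)] assms(1) by blast
qed

end
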